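(* Let $(A_i,\gamma_i)_{i\in I}$, with $I\neq\varnothing$, be a family of non-trivial quasiordered sets, i.e. $\Delta_{A_i}\neq\gamma_i\neq A_i\times A_i$ for all $i\in I$. Then the following are equivalent: (1) $\prod_{i\in I}\gamma_i$ is a half-space on $\prod_{i\in I}A_i$; (2) either $|I|=1$ and the single $\gamma_i$ is a half-space, or $|I|=2$ and both $(A_i,\gamma_i)$ are two-element chains.
   Context: A quasiorder on $A$ is a reflexive and transitive relation; $\Delta_A=\{(a,a)\mid a\in A\}$. A quasiorder $\alpha$ on $A$ is a half-space if there is a quasiorder $\beta$ on $A$ with $\alpha\cup\beta=A\times A$ and $\alpha\cap\beta=\Delta_A$. The direct product quasiorder is $\prod_{i\in I}\gamma_i=\{(\underline a,\underline b)\mid \underline a,\underline b\in\prod_{i\in I}A_i,\ (\underline a(i),\underline b(i))\in\gamma_i\text{ for all } i\in I\}$. A two-element chain is a two-element set with a linear order. *)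

theory Defs
  imports "HOL-Library.FuncSet"
begin

definition quasiorder :: "'a set \<Rightarrow> ('a \<times> 'a) set \<Rightarrow> bool" where
  "quasiorder A r \<longleftrightarrow> r \<subseteq> A \<times> A \<and> (\<forall>x\<in>A. (x, x) \<in> r) \<and> trans r"

definition half_space :: "'a set \<Rightarrow> ('a \<times> 'a) set \<Rightarrow> bool" where
  "half_space A \<alpha> \<longleftrightarrow> quasiorder A \<alpha> \<and>
     (\<exists>\<beta>. quasiorder A \<beta> \<and> \<alpha> \<union> \<beta> = A \<times> A \<and> \<alpha> \<inter> \<beta> = Id_on A)"

definition prod_qo :: "'i set \<Rightarrow> ('i \<Rightarrow> 'a set) \<Rightarrow> ('i \<Rightarrow> ('a \<times> 'a) set) \<Rightarrow> (('i \<Rightarrow> 'a) \<times> ('i \<Rightarrow> 'a)) set" where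
  "prod_qo I A \<gamma> = {(a, b). a \<in> PiE I A \<and> b \<in> PiE I A \<and> (\<forall>i\<in>I. (a i, b i) \<in> \<gamma> i)}"

definition two_element_chain :: "'a set \<Rightarrow> ('a \<times> 'a) set \<Rightarrow> bool" where
  "two_element_chain A r \<longleftrightarrow> card A = 2 \<and> quasiorder A r \<and> antisym r \<and>
     (\<forall>x\<in>A. \<forall>y\<in>A. (x, y) \<in> r \<or> (y, x) \<in> r)"

end

theory Submission
  imports Defs
begin

lemma upd_PiE: "f \<in> PiE I A \<Longrightarrow> k \<in> I \<Longrightarrow> x \<in> A k \<Longrightarrow> f(k := x) \<in> PiE I A"
  using PiE_fun_upd[of x A k f I] by (simp add: insert_absorb)

lemma half_space_iff:
  assumes "quasiorder A \<alpha>"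
  shows "half_space A \<alpha> \<longleftrightarrow>
    (\<forall>a\<in>A. \<forall>b\<in>A. \<forall>c\<in>A. (a, c) \<in> \<alpha> \<longrightarrow> a \<noteq> c \<longrightarrow> (a, b) \<in> \<alpha> \<or> (b, c) \<in> \<alpha>)"
proof
  assume "half_space A \<alpha>"
  then obtain \<beta> where b: "quasiorder A \<beta>" "\<alpha> \<union> \<beta> = A \<times> A" "\<alpha> \<inter> \<beta> = Id_on A"
    unfolding half_space_def by blast
  show "\<forall>a\<in>A. \<forall>b\<in>A. \<forall>c\<in>A. (a, c) \<in> \<alpha> \<longrightarrow> a \<noteq> c \<longrightarrow> (a, b) \<in> \<alpha> \<or> (b, c) \<in> \<alpha>"
  proof (intro ballI impI)
    fix a b c assume m: "a \<in> A" "b \<in> A" "c \<in> A" "(a, c) \<in> \<alpha>" "a \<noteq> c"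
    show "(a, b) \<in> \<alpha> \<or> (b, c) \<in> \<alpha>"
    proof (rule ccontr)
      assume "\<not> ?thesis"
      then have "(a, b) \<in> \<beta>" "(b, c) \<in> \<beta>" using b(2) m by blast+
      then have "(a, c) \<in> \<beta>" using b(1) unfolding quasiorder_def trans_def by blast
      then have "(a, c) \<in> Id_on A" using b(3) m(4) by blast
      then show False using m(5) by auto
    qed
  qed
next
  assume H: "\<forall>a\<in>A. \<forall>b\<in>A. \<forall>c\<in>A. (a, c) \<in> \<alpha> \<longrightarrow> a \<noteq> c \<longrightarrow> (a, b) \<in> \<alpha> \<or> (b, c) \<in> \<alpha>"
  define \<beta> where "\<beta> = Id_on A \<union> (A \<times> A - \<alpha>)"
  have "quasiorder A \<beta>"
    unfolding quasiorder_def
  proof (intro conjI)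
    show "\<beta> \<subseteq> A \<times> A" unfolding \<beta>_def by auto
    show "\<forall>x\<in>A. (x, x) \<in> \<beta>" unfolding \<beta>_def by auto
    show "trans \<beta>"
      unfolding trans_def
    proof (intro allI impI)
      fix x y z assume "(x, y) \<in> \<beta>" "(y, z) \<in> \<beta>"
      then show "(x, z) \<in> \<beta>" unfolding \<beta>_def using H by auto
    qed
  qed
  moreover have "\<alpha> \<union> \<beta> = A \<times> A" using assms unfolding \<beta>_def quasiorder_def by auto
  moreover have "\<alpha> \<inter> \<beta> = Id_on A" using assms unfolding \<beta>_def quasiorder_def by auto
  ultimately show "half_space A \<alpha>" using assms unfolding half_space_def by blast
qed

lemma prod_qo_quasiorder:
  assumes "\<And>i. i \<in> I \<Longrightarrow> quasiorder (A i) (\<gamma> i)"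
  shows "quasiorder (PiE I A) (prod_qo I A \<gamma>)"
  unfolding quasiorder_def
proof (intro conjI)
  show "prod_qo I A \<gamma> \<subseteq> PiE I A \<times> PiE I A" unfolding prod_qo_def by auto
  show "\<forall>x\<in>PiE I A. (x, x) \<in> prod_qo I A \<gamma>"
    using assms unfolding prod_qo_def quasiorder_def by (auto simp: PiE_iff)
  show "trans (prod_qo I A \<gamma>)"
    unfolding trans_def
  proof (intro allI impI)
    fix x y z assume "(x, y) \<in> prod_qo I A \<gamma>" "(y, z) \<in> prod_qo I A \<gamma>"
    then show "(x, z) \<in> prod_qo I A \<gamma>"
      using assms unfolding prod_qo_def quasiorder_def trans_def by blast
  qed
qed

lemma prod_mem: "(a, b) \<in> prod_qo I A \<gamma> \<longleftrightarrow> a \<in> PiE I A \<and> b \<in> PiE I A \<and> (\<forall>i\<in>I. (a i, b i) \<in> \<gamma> i)"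
  unfolding prod_qo_def by auto

lemma card2_three: "card X = 2 \<Longrightarrow> x \<in> X \<Longrightarrow> y \<in> X \<Longrightarrow> z \<in> X \<Longrightarrow> x \<noteq> y \<Longrightarrow> z = x \<or> z = y"
  by (auto simp: card_2_iff)

context
  fixes I :: "'i set" and A :: "'i \<Rightarrow> 'a set" and \<gamma> :: "'i \<Rightarrow> ('a \<times> 'a) set" and e
  assumes qo: "\<And>i. i \<in> I \<Longrightarrow> quasiorder (A i) (\<gamma> i)"
    and nt: "\<And>i. i \<in> I \<Longrightarrow> Id_on (A i) \<noteq> \<gamma> i \<and> \<gamma> i \<noteq> A i \<times> A i"
    and H: "\<forall>a\<in>PiE I A. \<forall>b\<in>PiE I A. \<forall>c\<in>PiE I A. (a, c) \<in> prod_qo I A \<gamma> \<longrightarrow> a \<noteq> c \<longrightarrow>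
              (a, b) \<in> prod_qo I A \<gamma> \<or> (b, c) \<in> prod_qo I A \<gamma>"
    and e: "e \<in> PiE I A"
begin

lemma refl_c: "l \<in> I \<Longrightarrow> x \<in> A l \<Longrightarrow> (x, x) \<in> \<gamma> l"
  using qo unfolding quasiorder_def by blast

lemma sub_c: "l \<in> I \<Longrightarrow> (x, y) \<in> \<gamma> l \<Longrightarrow> x \<in> A l \<and> y \<in> A l"
  using qo unfolding quasiorder_def by blast

lemma trans_c: "l \<in> I \<Longrightarrow> (x, y) \<in> \<gamma> l \<Longrightarrow> (y, z) \<in> \<gamma> l \<Longrightarrow> (x, z) \<in> \<gamma> l"
  using qo unfolding quasiorder_def trans_def by blast

lemma e_c: "l \<in> I \<Longrightarrow> e l \<in> A l"
  using e by auto

lemma strict_c: "i \<in> I \<Longrightarrow> \<exists>p q. (p, q) \<in> \<gamma> i \<and> p \<noteq> q"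
proof (rule ccontr)
  assume i: "i \<in> I" and "\<not> (\<exists>p q. (p, q) \<in> \<gamma> i \<and> p \<noteq> q)"
  then have 1: "\<gamma> i \<subseteq> Id_on (A i)" using sub_c[OF i] by (auto simp: Id_on_iff)
  have "Id_on (A i) \<subseteq> \<gamma> i" using refl_c[OF i] by auto
  with 1 have "\<gamma> i = Id_on (A i)" by blast
  then show False using nt i by blast
qed

lemma nonrel_c: "i \<in> I \<Longrightarrow> \<exists>p\<in>A i. \<exists>q\<in>A i. (p, q) \<notin> \<gamma> i"
proof (rule ccontr)
  assume i: "i \<in> I" and "\<not> (\<exists>p\<in>A i. \<exists>q\<in>A i. (p, q) \<notin> \<gamma> i)"
  then have 1: "A i \<times> A i \<subseteq> \<gamma> i" by auto
  have "\<gamma> i \<subseteq> A i \<times> A i" using qo[OF i] unfolding quasiorder_def by blast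
  with 1 have "\<gamma> i = A i \<times> A i" by blast
  then show False using nt i by blast
qed

lemma Hv: "a \<in> PiE I A \<Longrightarrow> b \<in> PiE I A \<Longrightarrow> c \<in> PiE I A \<Longrightarrow> (a, c) \<in> prod_qo I A \<gamma> \<Longrightarrow> a \<noteq> c
  \<Longrightarrow> (a, b) \<notin> prod_qo I A \<gamma> \<Longrightarrow> (b, c) \<notin> prod_qo I A \<gamma> \<Longrightarrow> False"
  using H by blast

lemma L_total:
  assumes ij: "i \<in> I" "j \<in> I" "i \<noteq> j" and pq: "p \<in> A i" "q \<in> A i"
  shows "(p, q) \<in> \<gamma> i \<or> (q, p) \<in> \<gamma> i"
proof (rule ccontr)
  assume nn: "\<not> ?thesis"
  obtain u v where uv: "(u, v) \<in> \<gamma> j" "u \<noteq> v" using strict_c ij by blast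
  have uvA: "u \<in> A j" "v \<in> A j" using sub_c uv ij by auto
  define a where "a = e(i := p, j := u)"
  define c where "c = e(i := p, j := v)"
  define b where "b = e(i := q)"
  have P: "a \<in> PiE I A" "b \<in> PiE I A" "c \<in> PiE I A"
    unfolding a_def b_def c_def using upd_PiE e ij pq uvA by metis+
  have "\<forall>l\<in>I. (a l, c l) \<in> \<gamma> l"
  proof
    fix l assume l: "l \<in> I"
    show "(a l, c l) \<in> \<gamma> l"
    proof (cases "l = j")
      case True then show ?thesis using uv by (simp add: a_def c_def)
    next
      case False
      then have "a l = c l" by (simp add: a_def c_def)
      moreover have "a l \<in> A l" using P l by auto
      ultimately show ?thesis using refl_c l by simp
    qed
  qed
  then have "(a, c) \<in> prod_qo I A \<gamma>" unfolding prod_mem using P by blast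
  moreover have "a \<noteq> c"
  proof
    assume "a = c" then have "a j = c j" by simp
    then show False using uv by (simp add: a_def c_def)
  qed
  moreover have "(a, b) \<notin> prod_qo I A \<gamma>"
  proof
    assume "(a, b) \<in> prod_qo I A \<gamma>"
    then have "(a i, b i) \<in> \<gamma> i" unfolding prod_mem using ij by blast
    then show False using nn ij by (simp add: a_def b_def)
  qed
  moreover have "(b, c) \<notin> prod_qo I A \<gamma>"
  proof
    assume "(b, c) \<in> prod_qo I A \<gamma>"
    then have "(b i, c i) \<in> \<gamma> i" unfolding prod_mem using ij by blast
    then show False using nn ij by (simp add: c_def b_def)
  qed
  ultimately show False by (rule Hv[OF P])
qed


lemma two_viol:
  assumes ij: "i \<in> I" "j \<in> I" "i \<noteq> j"
    and xs: "x1 \<in> A i" "x2 \<in> A i" "x3 \<in> A i"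
    and ys: "y1 \<in> A j" "y2 \<in> A j" "y3 \<in> A j"
    and le: "(x1, x3) \<in> \<gamma> i" "(y1, y3) \<in> \<gamma> j"
    and ne: "x1 \<noteq> x3 \<or> y1 \<noteq> y3"
    and n1: "(x1, x2) \<notin> \<gamma> i \<or> (y1, y2) \<notin> \<gamma> j"
    and n2: "(x2, x3) \<notin> \<gamma> i \<or> (y2, y3) \<notin> \<gamma> j"
  shows False
proof -
  define a where "a = e(i := x1, j := y1)"
  define b where "b = e(i := x2, j := y2)"
  define c where "c = e(i := x3, j := y3)"
  have P: "a \<in> PiE I A" "b \<in> PiE I A" "c \<in> PiE I A"
    unfolding a_def b_def c_def using upd_PiE[OF upd_PiE[OF e]] ij xs ys by blast+
  have ai: "a i = x1" "a j = y1" "b i = x2" "b j = y2" "c i = x3" "c j = y3"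
    using ij by (auto simp: a_def b_def c_def)
  have "\<forall>l\<in>I. (a l, c l) \<in> \<gamma> l"
  proof
    fix l assume l: "l \<in> I"
    show "(a l, c l) \<in> \<gamma> l"
    proof (cases "l = i \<or> l = j")
      case True then show ?thesis using le ai by auto
    next
      case False
      then have "a l = c l" by (simp add: a_def c_def)
      moreover have "a l \<in> A l" using P l by auto
      ultimately show ?thesis using refl_c l by simp
    qed
  qed
  then have "(a, c) \<in> prod_qo I A \<gamma>" unfolding prod_mem using P by blast
  moreover have "a \<noteq> c" using ne ai by metis
  moreover have "(a, b) \<notin> prod_qo I A \<gamma>"
  proof
    assume "(a, b) \<in> prod_qo I A \<gamma>"
    then have "(a i, b i) \<in> \<gamma> i" "(a j, b j) \<in> \<gamma> j" unfolding prod_mem using ij by blast+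
    then show False using n1 ai by simp
  qed
  moreover have "(b, c) \<notin> prod_qo I A \<gamma>"
  proof
    assume "(b, c) \<in> prod_qo I A \<gamma>"
    then have "(b i, c i) \<in> \<gamma> i" "(b j, c j) \<in> \<gamma> j" unfolding prod_mem using ij by blast+
    then show False using n2 ai by simp
  qed
  ultimately show False by (rule Hv[OF P])
qed

lemma L_extreme:
  assumes ij: "i \<in> I" "j \<in> I" "i \<noteq> j" and pq: "(p, q) \<in> \<gamma> i" "p \<noteq> q" and r: "r \<in> A i"
  shows "(p, r) \<in> \<gamma> i \<and> (r, q) \<in> \<gamma> i"
proof -
  obtain s t where st: "s \<in> A j" "t \<in> A j" "(s, t) \<notin> \<gamma> j" using nonrel_c ij by blast
  have pqA: "p \<in> A i" "q \<in> A i" using sub_c pq ij by auto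
  have "(p, r) \<in> \<gamma> i"
  proof (rule ccontr)
    assume "(p, r) \<notin> \<gamma> i"
    then show False
      using two_viol[OF ij pqA(1) r pqA(2) st(2) st(1) st(2) pq(1) refl_c[OF ij(2) st(2)]] pq st by blast
  qed
  moreover have "(r, q) \<in> \<gamma> i"
  proof (rule ccontr)
    assume "(r, q) \<notin> \<gamma> i"
    then show False
      using two_viol[OF ij pqA(1) r pqA(2) st(1) st(2) st(1) pq(1) refl_c[OF ij(2) st(1)]] pq st by blast
  qed
  ultimately show ?thesis by blast
qed

lemma L_three:
  assumes ijk: "i \<in> I" "j \<in> I" "k \<in> I" "i \<noteq> j" "i \<noteq> k" "j \<noteq> k"
  shows False
proof -
  obtain p q where pq: "(p, q) \<in> \<gamma> i" "p \<noteq> q" using strict_c ijk by blast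
  have pqA: "p \<in> A i" "q \<in> A i" using sub_c pq ijk by auto
  obtain x y where xy: "x \<in> A j" "y \<in> A j" "(y, x) \<notin> \<gamma> j" using nonrel_c ijk by blast
  obtain s t where st: "s \<in> A k" "t \<in> A k" "(t, s) \<notin> \<gamma> k" using nonrel_c ijk by blast
  define a where "a = e(i := p, j := y, k := s)"
  define b where "b = e(j := x, k := t)"
  define c where "c = e(i := q, j := y, k := s)"
  have P: "a \<in> PiE I A" "b \<in> PiE I A" "c \<in> PiE I A"
    unfolding a_def b_def c_def
    using upd_PiE[OF upd_PiE[OF upd_PiE[OF e ijk(1) pqA(1)] ijk(2) xy(2)] ijk(3) st(1)]
      upd_PiE[OF upd_PiE[OF e ijk(2) xy(1)] ijk(3) st(2)]
      upd_PiE[OF upd_PiE[OF upd_PiE[OF e ijk(1) pqA(2)] ijk(2) xy(2)] ijk(3) st(1)] by auto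
  have ai: "a i = p" "a j = y" "a k = s" "b j = x" "b k = t" "c i = q" "c j = y" "c k = s"
    using ijk by (auto simp: a_def b_def c_def)
  have "\<forall>l\<in>I. (a l, c l) \<in> \<gamma> l"
  proof
    fix l assume l: "l \<in> I"
    show "(a l, c l) \<in> \<gamma> l"
    proof (cases "l = i")
      case True then show ?thesis using pq ai by auto
    next
      case False
      then have "a l = c l" by (simp add: a_def c_def)
      moreover have "a l \<in> A l" using P l by auto
      ultimately show ?thesis using refl_c l by simp
    qed
  qed
  then have "(a, c) \<in> prod_qo I A \<gamma>" unfolding prod_mem using P by blast
  moreover have "a \<noteq> c" using pq ai by metis
  moreover have "(a, b) \<notin> prod_qo I A \<gamma>"
  proof
    assume "(a, b) \<in> prod_qo I A \<gamma>"
    then have "(a j, b j) \<in> \<gamma> j" unfolding prod_mem using ijk by blast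
    then show False using xy ai by simp
  qed
  moreover have "(b, c) \<notin> prod_qo I A \<gamma>"
  proof
    assume "(b, c) \<in> prod_qo I A \<gamma>"
    then have "(b k, c k) \<in> \<gamma> k" unfolding prod_mem using ijk by blast
    then show False using st ai by simp
  qed
  ultimately show False by (rule Hv[OF P])
qed

lemma L_antisym:
  assumes ij: "i \<in> I" "j \<in> I" "i \<noteq> j"
  shows "antisym (\<gamma> i)"
  unfolding antisym_def
proof (intro allI impI)
  fix p q assume pq: "(p, q) \<in> \<gamma> i" "(q, p) \<in> \<gamma> i"
  show "p = q"
  proof (rule ccontr)
    assume ne: "p \<noteq> q"
    have "A i \<times> A i \<subseteq> \<gamma> i"
    proof clarify
      fix x y assume xy: "x \<in> A i" "y \<in> A i"
      have "(x, q) \<in> \<gamma> i" using L_extreme[OF ij pq(1) ne xy(1)] by blast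
      moreover have "(p, y) \<in> \<gamma> i" using L_extreme[OF ij pq(1) ne xy(2)] by blast
      ultimately show "(x, y) \<in> \<gamma> i" using trans_c[OF ij(1)] pq(2) by blast
    qed
    moreover have "\<gamma> i \<subseteq> A i \<times> A i" using qo[OF ij(1)] unfolding quasiorder_def by blast
    ultimately show False using nt[OF ij(1)] by blast
  qed
qed

lemma L_chain:
  assumes ij: "i \<in> I" "j \<in> I" "i \<noteq> j"
  shows "two_element_chain (A i) (\<gamma> i)"
proof -
  obtain p q where pq: "(p, q) \<in> \<gamma> i" "p \<noteq> q" using strict_c ij by blast
  have pqA: "p \<in> A i" "q \<in> A i" using sub_c pq ij by auto
  have as: "antisym (\<gamma> i)" by (rule L_antisym[OF ij])
  have "A i = {p, q}"
  proof
    show "{p, q} \<subseteq> A i" using pqA by auto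
    show "A i \<subseteq> {p, q}"
    proof
      fix r assume r: "r \<in> A i"
      show "r \<in> {p, q}"
      proof (rule ccontr)
        assume "r \<notin> {p, q}"
        then have rp: "r \<noteq> p" "r \<noteq> q" by auto
        have 1: "(p, r) \<in> \<gamma> i" "(r, q) \<in> \<gamma> i" using L_extreme[OF ij pq r] by auto
        have "(q, r) \<in> \<gamma> i" using L_extreme[OF ij 1(1) rp(1)[symmetric] pqA(2)] by auto
        then show False using 1(2) rp(2) as unfolding antisym_def by blast
      qed
    qed
  qed
  then have "card (A i) = 2" using pq by simp
  moreover have "\<forall>x\<in>A i. \<forall>y\<in>A i. (x, y) \<in> \<gamma> i \<or> (y, x) \<in> \<gamma> i" using L_total[OF ij] by blast
  ultimately show ?thesis unfolding two_element_chain_def using qo[OF ij(1)] as by blast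
qed

end


lemma singleton_case:
  fixes A :: "'i \<Rightarrow> 'a set" and \<gamma> :: "'i \<Rightarrow> ('a \<times> 'a) set"
  assumes qo: "quasiorder (A i) (\<gamma> i)"
  shows "half_space (PiE {i} A) (prod_qo {i} A \<gamma>) \<longleftrightarrow> half_space (A i) (\<gamma> i)"
proof -
  have qoP: "quasiorder (PiE {i} A) (prod_qo {i} A \<gamma>)"
    by (rule prod_qo_quasiorder) (use qo in auto)
  have mem: "(a, b) \<in> prod_qo {i} A \<gamma> \<longleftrightarrow> a \<in> PiE {i} A \<and> b \<in> PiE {i} A \<and> (a i, b i) \<in> \<gamma> i" for a b
    unfolding prod_mem by auto
  define f :: "'a \<Rightarrow> 'i \<Rightarrow> 'a" where "f = (\<lambda>x. (\<lambda>_. undefined)(i := x))"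
  have fP: "x \<in> A i \<Longrightarrow> f x \<in> PiE {i} A" for x unfolding f_def by (auto simp: PiE_iff extensional_def)
  have fi: "f x i = x" for x unfolding f_def by simp
  show ?thesis
    unfolding half_space_iff[OF qoP] half_space_iff[OF qo]
  proof
    assume H: "\<forall>a\<in>PiE {i} A. \<forall>b\<in>PiE {i} A. \<forall>c\<in>PiE {i} A. (a, c) \<in> prod_qo {i} A \<gamma> \<longrightarrow> a \<noteq> c \<longrightarrow>
              (a, b) \<in> prod_qo {i} A \<gamma> \<or> (b, c) \<in> prod_qo {i} A \<gamma>"
    show "\<forall>a\<in>A i. \<forall>b\<in>A i. \<forall>c\<in>A i. (a, c) \<in> \<gamma> i \<longrightarrow> a \<noteq> c \<longrightarrow> (a, b) \<in> \<gamma> i \<or> (b, c) \<in> \<gamma> i"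
    proof (intro ballI impI)
      fix x y z assume xyz: "x \<in> A i" "y \<in> A i" "z \<in> A i" "(x, z) \<in> \<gamma> i" "x \<noteq> z"
      have "(f x, f z) \<in> prod_qo {i} A \<gamma>" using mem fP fi xyz by simp
      moreover have "f x \<noteq> f z" using fi xyz(5) by metis
      ultimately have "(f x, f y) \<in> prod_qo {i} A \<gamma> \<or> (f y, f z) \<in> prod_qo {i} A \<gamma>"
        using H fP xyz by blast
      then show "(x, y) \<in> \<gamma> i \<or> (y, z) \<in> \<gamma> i" unfolding mem fi by blast
    qed
  next
    assume H: "\<forall>a\<in>A i. \<forall>b\<in>A i. \<forall>c\<in>A i. (a, c) \<in> \<gamma> i \<longrightarrow> a \<noteq> c \<longrightarrow> (a, b) \<in> \<gamma> i \<or> (b, c) \<in> \<gamma> i"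
    show "\<forall>a\<in>PiE {i} A. \<forall>b\<in>PiE {i} A. \<forall>c\<in>PiE {i} A. (a, c) \<in> prod_qo {i} A \<gamma> \<longrightarrow> a \<noteq> c \<longrightarrow>
              (a, b) \<in> prod_qo {i} A \<gamma> \<or> (b, c) \<in> prod_qo {i} A \<gamma>"
    proof (intro ballI impI)
      fix a b c assume abc: "a \<in> PiE {i} A" "b \<in> PiE {i} A" "c \<in> PiE {i} A"
        "(a, c) \<in> prod_qo {i} A \<gamma>" "a \<noteq> c"
      have "a i \<noteq> c i" using PiE_ext[OF abc(1) abc(3)] abc(5) by blast
      moreover have "a i \<in> A i" "b i \<in> A i" "c i \<in> A i" using abc by auto
      moreover have "(a i, c i) \<in> \<gamma> i" using abc(4) mem by blast
      ultimately have "(a i, b i) \<in> \<gamma> i \<or> (b i, c i) \<in> \<gamma> i" using H by blast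
      then show "(a, b) \<in> prod_qo {i} A \<gamma> \<or> (b, c) \<in> prod_qo {i} A \<gamma>" using mem abc by blast
    qed
  qed
qed

lemma chain2_H:
  assumes I: "I = {i, j}" "i \<noteq> j"
    and ch: "\<forall>k\<in>I. two_element_chain (A k) (\<gamma> k)"
  shows "\<forall>a\<in>PiE I A. \<forall>b\<in>PiE I A. \<forall>c\<in>PiE I A. (a, c) \<in> prod_qo I A \<gamma> \<longrightarrow> a \<noteq> c \<longrightarrow>
              (a, b) \<in> prod_qo I A \<gamma> \<or> (b, c) \<in> prod_qo I A \<gamma>"
proof (intro ballI impI)
  fix a b c assume abc: "a \<in> PiE I A" "b \<in> PiE I A" "c \<in> PiE I A"
    "(a, c) \<in> prod_qo I A \<gamma>" "a \<noteq> c"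
  have card: "\<And>l. l \<in> I \<Longrightarrow> card (A l) = 2" using ch unfolding two_element_chain_def by blast
  have refl: "\<And>l x. l \<in> I \<Longrightarrow> x \<in> A l \<Longrightarrow> (x, x) \<in> \<gamma> l"
    using ch unfolding two_element_chain_def quasiorder_def by blast
  have tot: "\<And>l x y. l \<in> I \<Longrightarrow> x \<in> A l \<Longrightarrow> y \<in> A l \<Longrightarrow> (x, y) \<in> \<gamma> l \<or> (y, x) \<in> \<gamma> l"
    using ch unfolding two_element_chain_def by blast
  have inA: "\<And>l. l \<in> I \<Longrightarrow> a l \<in> A l \<and> b l \<in> A l \<and> c l \<in> A l" using abc by auto
  have acle: "\<And>l. l \<in> I \<Longrightarrow> (a l, c l) \<in> \<gamma> l" using abc(4) unfolding prod_mem by blast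
  show "(a, b) \<in> prod_qo I A \<gamma> \<or> (b, c) \<in> prod_qo I A \<gamma>"
  proof (rule ccontr)
    assume nn: "\<not> ?thesis"
    obtain k where k: "k \<in> I" "a k \<noteq> c k" using PiE_ext[OF abc(1) abc(3)] abc(5) by blast
    obtain m where m: "m \<in> I" "(a m, b m) \<notin> \<gamma> m" using nn abc unfolding prod_mem by blast
    obtain n where n: "n \<in> I" "(b n, c n) \<notin> \<gamma> n" using nn abc unfolding prod_mem by blast
    have "m \<noteq> k"
    proof
      assume "m = k"
      then have "b k = a k \<or> b k = c k" using card2_three[OF card[OF k(1)]] inA[OF k(1)] k(2) by blast
      then show False using m \<open>m = k\<close> refl[OF k(1)] inA[OF k(1)] acle[OF k(1)] by auto
    qed
    moreover have "n \<noteq> k"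
    proof
      assume "n = k"
      then have "b k = a k \<or> b k = c k" using card2_three[OF card[OF k(1)]] inA[OF k(1)] k(2) by blast
      then show False using n \<open>n = k\<close> refl[OF k(1)] inA[OF k(1)] acle[OF k(1)] by auto
    qed
    ultimately have "m = n" using m(1) n(1) k(1) I by auto
    have "a m \<noteq> b m" using m refl inA by metis
    moreover have "c m \<noteq> b m" using n \<open>m = n\<close> refl inA by metis
    ultimately have "a m = c m" using card2_three[OF card[OF m(1)]] inA[OF m(1)] by metis
    then show False using m n \<open>m = n\<close> tot[of m "a m" "b m"] inA[OF m(1)] by auto
  qed
qed

theorem theorem3p4:
  fixes I :: "'i set" and A :: "'i \<Rightarrow> 'a set" and \<gamma> :: "'i \<Rightarrow> ('a \<times> 'a) set"
  assumes "I \<noteq> {}"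
    and "\<And>i. i \<in> I \<Longrightarrow> quasiorder (A i) (\<gamma> i)"
    and "\<And>i. i \<in> I \<Longrightarrow> Id_on (A i) \<noteq> \<gamma> i \<and> \<gamma> i \<noteq> A i \<times> A i"
  shows "half_space (PiE I A) (prod_qo I A \<gamma>) \<longleftrightarrow>
           ((\<exists>i. I = {i} \<and> half_space (A i) (\<gamma> i)) \<or>
            (card I = 2 \<and> (\<forall>i\<in>I. two_element_chain (A i) (\<gamma> i))))"
proof -
  note qo = assms(2) and nt = assms(3)
  have ne: "A i \<noteq> {}" if i: "i \<in> I" for i
  proof
    assume "A i = {}"
    then have "\<gamma> i = {}" using qo[OF i] unfolding quasiorder_def by blast
    then show False using nt[OF i] \<open>A i = {}\<close> by simp
  qed
  then obtain e where e: "e \<in> PiE I A" using PiE_eq_empty_iff[of I A] by blast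
  have qoP: "quasiorder (PiE I A) (prod_qo I A \<gamma>)" by (rule prod_qo_quasiorder) (rule qo)
  show ?thesis
  proof (cases "\<exists>i. I = {i}")
    case True
    then obtain i where i: "I = {i}" by blast
    then have "\<not> card I = 2" by simp
    moreover have "(\<exists>i'. I = {i'} \<and> half_space (A i') (\<gamma> i')) \<longleftrightarrow> half_space (A i) (\<gamma> i)"
      using i by auto
    moreover have "i \<in> I" using i by simp
    ultimately show ?thesis using singleton_case[where A=A and i=i and \<gamma>=\<gamma>, OF qo[OF \<open>i \<in> I\<close>]] i by simp
  next
    case False
    obtain i where i: "i \<in> I" using assms(1) by blast
    obtain j where j: "j \<in> I" "j \<noteq> i" using False i by blast
    have ij: "i \<in> I" "j \<in> I" "i \<noteq> j" using i j by auto
    have "half_space (PiE I A) (prod_qo I A \<gamma>) \<longleftrightarrow>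
            (card I = 2 \<and> (\<forall>i\<in>I. two_element_chain (A i) (\<gamma> i)))"
      unfolding half_space_iff[OF qoP]
    proof
      assume H: "\<forall>a\<in>PiE I A. \<forall>b\<in>PiE I A. \<forall>c\<in>PiE I A. (a, c) \<in> prod_qo I A \<gamma> \<longrightarrow> a \<noteq> c \<longrightarrow>
              (a, b) \<in> prod_qo I A \<gamma> \<or> (b, c) \<in> prod_qo I A \<gamma>"
      have IE: "I = {i, j}"
      proof
        show "{i, j} \<subseteq> I" using ij by auto
        show "I \<subseteq> {i, j}"
        proof
          fix k assume k: "k \<in> I"
          show "k \<in> {i, j}"
          proof (rule ccontr)
            assume "k \<notin> {i, j}"
            then show False using L_three[OF qo nt H e ij(1) ij(2) k ij(3)] by auto
          qed
        qed
      qed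
      then have "card I = 2" using ij by simp
      moreover have "\<forall>k\<in>I. two_element_chain (A k) (\<gamma> k)"
      proof
        fix k assume k: "k \<in> I"
        show "two_element_chain (A k) (\<gamma> k)"
        proof (cases "k = i")
          case True then show ?thesis using L_chain[OF qo nt H e ij(1) ij(2) ij(3)] by simp
        next
          case False then show ?thesis using L_chain[OF qo nt H e k ij(1) False] by simp
        qed
      qed
      ultimately show "card I = 2 \<and> (\<forall>i\<in>I. two_element_chain (A i) (\<gamma> i))" by blast
    next
      assume c: "card I = 2 \<and> (\<forall>i\<in>I. two_element_chain (A i) (\<gamma> i))"
      then obtain x y where xy: "I = {x, y}" "x \<noteq> y" unfolding card_2_iff by blast
      show "\<forall>a\<in>PiE I A. \<forall>b\<in>PiE I A. \<forall>c\<in>PiE I A. (a, c) \<in> prod_qo I A \<gamma> \<longrightarrow> a \<noteq> c \<longrightarrow>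
              (a, b) \<in> prod_qo I A \<gamma> \<or> (b, c) \<in> prod_qo I A \<gamma>"
        by (rule chain2_H[OF xy]) (use c in blast)
    qed
    moreover have "\<not> (\<exists>i. I = {i} \<and> half_space (A i) (\<gamma> i))" using False by blast
    ultimately show ?thesis by blast
  qed
qed

end
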